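(* Let $T\in\mathcal L(\mathcal P_n)$, $T\ne 0$, and suppose there is a constant $C>0$ such that for each nonconstant $f\in\mathcal P_n$ there exist $u\in Z(f)$ and $v\in Z(Tf)$ with $|u-v|\le C$. Then $T\phi_0$ is a nonzero constant polynomial $c$, and the matrix of $T$ with respect to the basis $\{\phi_0,\dots,\phi_n\}$ is upper triangular with all diagonal entries equal to $c$; i.e. for each $m=0,\dots,n$, $T\phi_m\in\operatorname{span}\{\phi_0,\dots,\phi_m\}$ and the coefficient of $\phi_m$ in $T\phi_m$ equals $c$.
   Context: Let $n\ge 1$ be an integer and $\mathcal P_n$ the complex vector space of polynomials in one complex variable of degree at most $n$; $\mathcal L(\mathcal P_n)$ is the set of linear operators $\mathcal P_n\to\mathcal P_n$; $\phi_k(z)=z^k/k!$ for $k=0,\dots,n$. For a nonzero $f$, $Z(f)$ is the multiset of roots of $f$ (with multiplicity; empty for nonzero constants); $Z(0)=\mathbb C$. *)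

theory Defs
  imports "HOL-Computational_Algebra.Polynomial" Complex_Main
begin

definition Pn :: "nat \<Rightarrow> complex poly set" where
  "Pn n = {p. degree p \<le> n}"

text \<open>Linear operator on P_n (T is a total function; only its behaviour on P_n matters).\<close>
definition lin_op_Pn :: "nat \<Rightarrow> (complex poly \<Rightarrow> complex poly) \<Rightarrow> bool" where
  "lin_op_Pn n T \<longleftrightarrow>
     (\<forall>p\<in>Pn n. T p \<in> Pn n) \<and>
     (\<forall>p\<in>Pn n. \<forall>q\<in>Pn n. T (p + q) = T p + T q) \<and>
     (\<forall>a. \<forall>p\<in>Pn n. T (smult a p) = smult a (T p))"

definition phi :: "nat \<Rightarrow> complex poly" where
  "phi k = monom (inverse (fact k)) k"

text \<open>Underlying set of the zero multiset Z(f); Z(0) = the whole plane.\<close>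
definition Zset :: "complex poly \<Rightarrow> complex set" where
  "Zset f = (if f = 0 then UNIV else {z. poly f z = 0})"

definition phi_coord :: "complex poly \<Rightarrow> nat \<Rightarrow> complex" where
  "phi_coord p k = fact k * coeff p k"

end

theory Submission
  imports Defs
begin

lemma top_dom:
  fixes \<alpha> :: "'i \<Rightarrow> complex" and p q :: "'i \<Rightarrow> nat" and C :: real
  assumes fin: "finite I" and C: "C \<ge> 0"
    and hp: "\<forall>i\<in>I. \<alpha> i \<noteq> 0 \<longrightarrow> p i \<le> N"
    and hq: "\<forall>i\<in>I. \<alpha> i \<noteq> 0 \<longrightarrow> p i = N \<longrightarrow> q i = 0"
    and kap: "(\<Sum>i\<in>I. if p i = N then \<alpha> i else 0) \<noteq> 0"
  shows "\<exists>a::complex. \<forall>w. cmod w \<le> C \<longrightarrow> (\<Sum>i\<in>I. \<alpha> i * a ^ p i * w ^ q i) \<noteq> 0"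
proof -
  define \<kappa> where "\<kappa> = (\<Sum>i\<in>I. if p i = N then \<alpha> i else 0)"
  define K where "K = (\<Sum>i\<in>I. cmod (\<alpha> i) * C ^ q i)"
  define r where "r = K / cmod \<kappa> + 1"
  have kp: "cmod \<kappa> > 0" using kap \<kappa>_def by simp
  have K0: "K \<ge> 0" unfolding K_def using C by (intro sum_nonneg) auto
  have r1: "r \<ge> 1" unfolding r_def using K0 kp by simp
  have rk: "cmod \<kappa> * r > K" unfolding r_def using kp by (simp add: field_simps)
  show ?thesis
  proof (intro exI allI impI)
    fix w :: complex assume w: "cmod w \<le> C"
    define a where "a = complex_of_real r"
    define R where "R = (\<Sum>i\<in>I. if p i = N then 0 else \<alpha> i * a ^ p i * w ^ q i)"
    have split: "(\<Sum>i\<in>I. \<alpha> i * a ^ p i * w ^ q i) = \<kappa> * a ^ N + R"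
    proof -
      have "\<And>i. i \<in> I \<Longrightarrow> \<alpha> i * a ^ p i * w ^ q i =
         (if p i = N then \<alpha> i else 0) * a ^ N + (if p i = N then 0 else \<alpha> i * a ^ p i * w ^ q i)"
        using hq by auto
      then have "(\<Sum>i\<in>I. \<alpha> i * a ^ p i * w ^ q i) = (\<Sum>i\<in>I. (if p i = N then \<alpha> i else 0) * a ^ N + (if p i = N then 0 else \<alpha> i * a ^ p i * w ^ q i))"
        by (rule sum.cong[OF refl])
      also have "\<dots> = \<kappa> * a ^ N + R" unfolding \<kappa>_def R_def by (simp add: sum.distrib sum_distrib_right)
      finally show ?thesis .
    qed
    have Rb: "cmod R * r \<le> K * r ^ N"
    proof -
      have "cmod R * r \<le> (\<Sum>i\<in>I. cmod (if p i = N then 0 else \<alpha> i * a ^ p i * w ^ q i)) * r"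
        unfolding R_def using r1 by (intro mult_right_mono norm_sum) auto
      also have "\<dots> = (\<Sum>i\<in>I. cmod (if p i = N then 0 else \<alpha> i * a ^ p i * w ^ q i) * r)"
        by (simp add: sum_distrib_right)
      also have "\<dots> \<le> (\<Sum>i\<in>I. cmod (\<alpha> i) * C ^ q i * r ^ N)"
      proof (rule sum_mono)
        fix i assume i: "i \<in> I"
        show "cmod (if p i = N then 0 else \<alpha> i * a ^ p i * w ^ q i) * r \<le> cmod (\<alpha> i) * C ^ q i * r ^ N"
        proof (cases "p i = N \<or> \<alpha> i = 0")
          case True then show ?thesis using C r1 by auto
        next
          case False
          then have pl: "Suc (p i) \<le> N" using hp i by force
          have "cmod (\<alpha> i * a ^ p i * w ^ q i) * r = cmod (\<alpha> i) * r ^ Suc (p i) * cmod w ^ q i"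
            using r1 by (simp add: a_def norm_mult norm_power mult_ac)
          also have "\<dots> \<le> cmod (\<alpha> i) * r ^ N * C ^ q i"
            by (intro mult_mono power_mono power_increasing pl r1 w) (use r1 in auto)
          finally show ?thesis using False by (simp add: mult_ac)
        qed
      qed
      also have "\<dots> = K * r ^ N" unfolding K_def by (simp add: sum_distrib_right)
      finally show ?thesis .
    qed
    have big: "cmod (\<kappa> * a ^ N) = cmod \<kappa> * r ^ N" using r1 by (simp add: a_def norm_mult norm_power)
    have "K * r ^ N < cmod \<kappa> * r * r ^ N"
      using rk r1 by (intro mult_strict_right_mono) auto
    then have "cmod R * r < cmod (\<kappa> * a ^ N) * r" using Rb big by (simp add: mult_ac)
    then have "cmod R < cmod (\<kappa> * a ^ N)" using r1 by (simp add: mult_less_cancel_right)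
    then have "\<kappa> * a ^ N + R \<noteq> 0"
      by (metis add_eq_0_iff norm_minus_cancel order_less_irrefl)
    then show "(\<Sum>i\<in>I. \<alpha> i * a ^ p i * w ^ q i) \<noteq> 0" using split by simp
  qed
qed


lemma Pn_0[simp]: "0 \<in> Pn n" by (simp add: Pn_def)
lemma Pn_add: "p \<in> Pn n \<Longrightarrow> q \<in> Pn n \<Longrightarrow> p + q \<in> Pn n"
  by (simp add: Pn_def degree_add_le)
lemma Pn_smult: "p \<in> Pn n \<Longrightarrow> smult a p \<in> Pn n"
  by (simp add: Pn_def)
lemma Pn_sum: "finite A \<Longrightarrow> (\<And>x. x \<in> A \<Longrightarrow> p x \<in> Pn n) \<Longrightarrow> sum p A \<in> Pn n"
  by (induction A rule: finite_induct) (auto intro: Pn_add)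

lemma lin_zero: "lin_op_Pn n T \<Longrightarrow> T 0 = 0"
proof -
  assume L: "lin_op_Pn n T"
  have "T (smult 0 0) = smult 0 (T 0)" using L Pn_0 unfolding lin_op_Pn_def by blast
  then show ?thesis by simp
qed

lemma lin_sum:
  assumes L: "lin_op_Pn n T" and fin: "finite A" and P: "\<And>x. x \<in> A \<Longrightarrow> p x \<in> Pn n"
  shows "T (\<Sum>x\<in>A. smult (a x) (p x)) = (\<Sum>x\<in>A. smult (a x) (T (p x)))"
  using fin P
proof (induction A rule: finite_induct)
  case empty then show ?case using lin_zero[OF L] by simp
next
  case (insert x F)
  have s: "(\<Sum>x\<in>F. smult (a x) (p x)) \<in> Pn n" using insert by (intro Pn_sum Pn_smult) auto
  have px: "smult (a x) (p x) \<in> Pn n" using insert by (intro Pn_smult) auto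
  have "T (\<Sum>x\<in>insert x F. smult (a x) (p x)) = T (smult (a x) (p x) + (\<Sum>x\<in>F. smult (a x) (p x)))"
    using insert by simp
  also have "\<dots> = T (smult (a x) (p x)) + T (\<Sum>x\<in>F. smult (a x) (p x))"
    using L s px unfolding lin_op_Pn_def by blast
  also have "\<dots> = smult (a x) (T (p x)) + (\<Sum>x\<in>F. smult (a x) (T (p x)))"
    using L insert unfolding lin_op_Pn_def by auto
  finally show ?case using insert by simp
qed

lemma coeff_phi: "coeff (phi k) j = (if k = j then inverse (fact k) else 0)"
  by (simp add: phi_def coeff_monom)

lemma phi_Pn: "k \<le> n \<Longrightarrow> phi k \<in> Pn n"
  by (simp add: Pn_def phi_def degree_monom_le order_trans[OF degree_monom_le])

lemma poly_le: "degree (p::complex poly) \<le> n \<Longrightarrow> poly p z = (\<Sum>j\<le>n. coeff p j * z ^ j)"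
proof -
  assume d: "degree p \<le> n"
  have "poly p z = (\<Sum>j\<le>degree p. coeff p j * z ^ j)" by (simp add: poly_altdef)
  also have "\<dots> = (\<Sum>j\<le>n. coeff p j * z ^ j)"
    using d by (intro sum.mono_neutral_left) (auto simp: coeff_eq_0)
  finally show ?thesis .
qed

lemma Pn_decomp: "p \<in> Pn n \<Longrightarrow> p = (\<Sum>k\<le>n. smult (coeff p k * fact k) (phi k))"
proof (rule poly_eqI)
  fix j assume p: "p \<in> Pn n"
  have "coeff (\<Sum>k\<le>n. smult (coeff p k * fact k) (phi k)) j = (\<Sum>k\<le>n. if k = j then coeff p j else 0)"
    unfolding coeff_sum coeff_smult coeff_phi by (intro sum.cong) auto
  also have "\<dots> = coeff p j" using p by (auto simp: Pn_def coeff_eq_0)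
  finally show "coeff p j = coeff (\<Sum>k\<le>n. smult (coeff p k * fact k) (phi k)) j" by simp
qed


lemma sum3_Sigma:
  "(\<Sum>k\<le>(M::nat). \<Sum>j\<le>(n::nat). \<Sum>l\<le>j. g k j l) = (\<Sum>(k,j,l)\<in>Sigma {..M} (\<lambda>k. Sigma {..n} (\<lambda>j. {..j::nat})). g k j l)"
proof -
  have "(\<Sum>k\<le>M. \<Sum>j\<le>n. \<Sum>l\<le>j. g k j l) = (\<Sum>k\<le>M. \<Sum>(j,l)\<in>Sigma {..n} (\<lambda>j. {..j::nat}). g k j l)"
    by (intro sum.cong refl sum.Sigma) auto
  also have "\<dots> = (\<Sum>(k,j,l)\<in>Sigma {..M} (\<lambda>k. Sigma {..n} (\<lambda>j. {..j::nat})). g k j l)"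
    by (rule sum.Sigma) auto
  finally show ?thesis .
qed

lemma band:
  fixes n M :: nat and T :: "complex poly \<Rightarrow> complex poly" and C :: real and e :: int
  assumes L: "lin_op_Pn n T" and C: "C > 0"
    and H: "\<forall>f\<in>Pn n. degree f > 0 \<longrightarrow> (\<exists>u\<in>Zset f. \<exists>v\<in>Zset (T f). cmod (u - v) \<le> C)"
    and E: "\<forall>j\<le>n. \<forall>k\<le>n. coeff (T (phi k)) j \<noteq> 0 \<longrightarrow> int j - int k \<le> e"
    and M1: "1 \<le> M" and Mn: "M \<le> n"
  shows "(\<Sum>k\<le>M. \<Sum>j\<le>n. if int j - int k = e then (-1)^(M-k) / fact (M-k) * coeff (T (phi k)) j else 0) = 0"
proof (rule ccontr)
  define c where "c j k = coeff (T (phi k)) j" for j k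
  assume nz: "(\<Sum>k\<le>M. \<Sum>j\<le>n. if int j - int k = e then (-1)^(M-k) / fact (M-k) * coeff (T (phi k)) j else 0) \<noteq> 0"
  define I where "I = Sigma {..M} (\<lambda>k. Sigma {..n} (\<lambda>j. {..j::nat}))"
  define \<alpha> where "\<alpha> = (\<lambda>(k,j,l). (-1)^(M-k) / fact (M-k) * c j k * of_nat (j choose l) :: complex)"
  define p where "p = (\<lambda>(k::nat,j::nat,l::nat). M - k + j - l)"
  define q where "q = (\<lambda>(k::nat,j::nat,l::nat). l)"
  define N where "N = nat (int M + e)"
  have finI: "finite I" unfolding I_def by auto
  have hpq: "p i \<le> N \<and> (p i = N \<longrightarrow> q i = 0)" if i: "i \<in> I" "\<alpha> i \<noteq> 0" for i
  proof -
    obtain k j l where kjl: "i = (k,j,l)" by (cases i) auto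
    have r: "k \<le> M" "j \<le> n" "l \<le> j" using i kjl I_def by auto
    have "c j k \<noteq> 0" using i kjl \<alpha>_def by auto
    then have "int j - int k \<le> e" using E r Mn unfolding c_def by auto
    then show ?thesis using r unfolding p_def q_def N_def kjl by auto
  qed
  have inner: "(\<Sum>l\<le>j. if p (k,j,l) = N then \<alpha> (k,j,l) else 0) =
      (if int j - int k = e then (-1)^(M-k) / fact (M-k) * c j k else 0)"
    if r: "k \<le> M" "j \<le> n" for k j
  proof (cases "c j k = 0")
    case True
    then have "\<alpha> (k,j,l) = 0" for l by (simp add: \<alpha>_def)
    then show ?thesis using True by (intro trans[OF sum.neutral]) auto
  next
    case False
    then have le: "int j - int k \<le> e" using E r Mn unfolding c_def by auto
    have "(\<Sum>l\<le>j. if p (k,j,l) = N then \<alpha> (k,j,l) else 0) =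
          (\<Sum>l\<le>j. if l = 0 then (if int j - int k = e then \<alpha> (k,j,0) else 0) else 0)"
      using le r by (intro sum.cong refl) (auto simp: p_def N_def)
    also have "\<dots> = (if int j - int k = e then \<alpha> (k,j,0) else 0)" by simp
    finally show ?thesis by (simp add: \<alpha>_def)
  qed
  have top: "(\<Sum>i\<in>I. if p i = N then \<alpha> i else 0) \<noteq> 0"
  proof -
    have "(\<Sum>i\<in>I. if p i = N then \<alpha> i else 0) = (\<Sum>k\<le>M. \<Sum>j\<le>n. \<Sum>l\<le>j. if p (k,j,l) = N then \<alpha> (k,j,l) else 0)"
      unfolding I_def sum3_Sigma by (intro sum.cong refl) clarsimp
    also have "\<dots> = (\<Sum>k\<le>M. \<Sum>j\<le>n. if int j - int k = e then (-1)^(M-k) / fact (M-k) * c j k else 0)"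
      using inner by simp
    finally show ?thesis using nz unfolding c_def by simp
  qed
  obtain a where a: "\<forall>w. cmod w \<le> C \<longrightarrow> (\<Sum>i\<in>I. \<alpha> i * a ^ p i * w ^ q i) \<noteq> 0"
  proof -
    have hp: "\<forall>i\<in>I. \<alpha> i \<noteq> 0 \<longrightarrow> p i \<le> N" using hpq by blast
    have hq: "\<forall>i\<in>I. \<alpha> i \<noteq> 0 \<longrightarrow> p i = N \<longrightarrow> q i = 0" using hpq by blast
    show ?thesis using top_dom[OF finI less_imp_le[OF C] hp hq top] that by blast
  qed
  define S where "S = (\<Sum>k\<le>M. smult ((-a)^(M-k) / fact (M-k)) (phi k))"
  have polyS: "poly S z = (z - a)^M / fact M" for z
  proof -
    have "poly S z = (\<Sum>k\<le>M. (-a)^(M-k) / fact (M-k) * (z ^ k / fact k))"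
      by (simp add: S_def poly_sum phi_def poly_monom field_simps)
    also have "\<dots> = (\<Sum>k\<le>M. of_nat (M choose k) * z ^ k * (-a) ^ (M - k)) / fact M"
      unfolding sum_divide_distrib by (intro sum.cong refl) (simp add: binomial_fact field_simps)
    also have "\<dots> = (z - a)^M / fact M" by (simp add: binomial_ring[symmetric])
    finally show ?thesis .
  qed
  have SPn: "S \<in> Pn n" unfolding S_def using Mn by (intro Pn_sum Pn_smult phi_Pn) auto
  have "poly S (a+1) \<noteq> 0" using polyS[of "a+1"] by simp
  then have S0: "S \<noteq> 0" by auto
  have degS: "degree S > 0"
  proof (rule ccontr)
    assume "\<not> degree S > 0"
    then have "degree S = 0" by simp
    then obtain c0 where "S = [:c0:]" by (metis degree_0_id)
    then have "poly S a = poly S (a+1)" by simp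
    moreover have "poly S a = 0" using polyS[of a] M1 by (simp add: power_0_left)
    ultimately show False using polyS[of "a+1"] by simp
  qed
  have ZS: "Zset S = {a}" using S0 polyS M1 by (auto simp: Zset_def)
  have TS: "T S = (\<Sum>k\<le>M. smult ((-a)^(M-k) / fact (M-k)) (T (phi k)))"
    unfolding S_def using Mn by (intro lin_sum[OF L]) (auto intro: phi_Pn)
  have polyTS: "poly (T S) (a + w) = (\<Sum>i\<in>I. \<alpha> i * a ^ p i * w ^ q i)" for w
  proof -
    have deg: "degree (T (phi k)) \<le> n" if "k \<le> M" for k
      using L phi_Pn[of k n] that Mn unfolding lin_op_Pn_def Pn_def by auto
    have "poly (T S) (a + w) = (\<Sum>k\<le>M. (-a)^(M-k) / fact (M-k) * poly (T (phi k)) (a + w))"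
      by (simp add: TS poly_sum)
    also have "\<dots> = (\<Sum>k\<le>M. \<Sum>j\<le>n. \<Sum>l\<le>j. \<alpha> (k,j,l) * a ^ p (k,j,l) * w ^ q (k,j,l))"
    proof (intro sum.cong refl)
      fix k assume k: "k \<in> {..M}"
      have "(-a)^(M-k) / fact (M-k) * poly (T (phi k)) (a + w)
          = (\<Sum>j\<le>n. (-a)^(M-k) / fact (M-k) * c j k * (w + a) ^ j)"
        using deg[of k] k by (simp add: poly_le sum_distrib_left c_def mult_ac add.commute)
      also have "\<dots> = (\<Sum>j\<le>n. \<Sum>l\<le>j. \<alpha> (k,j,l) * a ^ p (k,j,l) * w ^ q (k,j,l))"
      proof (intro sum.cong refl)
        fix j assume j: "j \<in> {..n}"
        have "(-a)^(M-k) / fact (M-k) * c j k * (w + a) ^ j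
           = (\<Sum>l\<le>j. (-a)^(M-k) / fact (M-k) * c j k * (of_nat (j choose l) * w ^ l * a ^ (j - l)))"
          by (simp add: binomial_ring sum_distrib_left)
        also have "\<dots> = (\<Sum>l\<le>j. \<alpha> (k,j,l) * a ^ p (k,j,l) * w ^ q (k,j,l))"
        proof (intro sum.cong refl)
          fix l assume l: "l \<in> {..j}"
          have pe: "p (k,j,l) = (M - k) + (j - l)" using l k by (auto simp: p_def)
          show "(-a)^(M-k) / fact (M-k) * c j k * (of_nat (j choose l) * w ^ l * a ^ (j - l))
              = \<alpha> (k,j,l) * a ^ p (k,j,l) * w ^ q (k,j,l)"
            unfolding pe by (simp add: \<alpha>_def q_def power_add power_minus[of a] field_simps)
        qed
        finally show "(-a)^(M-k) / fact (M-k) * c j k * (w + a) ^ j = (\<Sum>l\<le>j. \<alpha> (k,j,l) * a ^ p (k,j,l) * w ^ q (k,j,l))" .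
      qed
      finally show "(-a)^(M-k) / fact (M-k) * poly (T (phi k)) (a + w) = (\<Sum>j\<le>n. \<Sum>l\<le>j. \<alpha> (k,j,l) * a ^ p (k,j,l) * w ^ q (k,j,l))" .
    qed
    also have "\<dots> = (\<Sum>i\<in>I. \<alpha> i * a ^ p i * w ^ q i)"
      unfolding I_def sum3_Sigma by (intro sum.cong refl) clarsimp
    finally show ?thesis .
  qed
  obtain u v where uv: "u \<in> Zset S" "v \<in> Zset (T S)" "cmod (u - v) \<le> C"
    using H SPn degS by blast
  have u: "u = a" using uv ZS by auto
  have TS0: "T S \<noteq> 0" using a polyTS[of 0] C by fastforce
  have "poly (T S) v = 0" using uv TS0 by (simp add: Zset_def)
  moreover have "cmod (v - a) \<le> C" using uv u by (simp add: norm_minus_commute)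
  ultimately show False using a polyTS[of "v - a"] by simp
qed


lemma alt_ident:
  assumes "k \<ge> 1"
  shows "(\<Sum>i<k. (-1)^(k-i) / (fact (k-i) * fact i) :: complex) = - 1 / fact k"
proof -
  have z0: "(1 + (-1::complex)) ^ k = (\<Sum>i\<le>k. of_nat (k choose i) * 1 ^ i * (-1::complex) ^ (k - i))"
    by (rule binomial_ring)
  have z: "(\<Sum>i\<le>k. of_nat (k choose i) * (-1::complex) ^ (k - i)) = 0"
    using z0 assms by (simp add: power_0_left)
  have "(\<Sum>i\<le>k. (-1)^(k-i) / (fact (k-i) * fact i) :: complex) = (\<Sum>i\<le>k. of_nat (k choose i) * (-1::complex) ^ (k - i)) / fact k"
    unfolding sum_divide_distrib by (intro sum.cong refl) (simp add: binomial_fact field_simps)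
  also have "\<dots> = 0" using z by simp
  finally have "(\<Sum>i\<le>k. (-1)^(k-i) / (fact (k-i) * fact i) :: complex) = 0" .
  moreover have "(\<Sum>i\<le>k. (-1)^(k-i) / (fact (k-i) * fact i) :: complex) = (\<Sum>i<k. (-1)^(k-i) / (fact (k-i) * fact i)) + 1 / fact k"
  proof -
    have ins: "{..k} = insert k {..<k}" by auto
    show ?thesis unfolding ins by simp
  qed
  ultimately show ?thesis by (simp add: eq_neg_iff_add_eq_0)
qed

theorem mainTheorem9:
  fixes n :: nat and T :: "complex poly \<Rightarrow> complex poly" and C :: real
  assumes "n \<ge> 1"
    and "lin_op_Pn n T"
    and "\<exists>p\<in>Pn n. T p \<noteq> 0"
    and "C > 0"
    and "\<forall>f\<in>Pn n. degree f > 0 \<longrightarrow>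
           (\<exists>u\<in>Zset f. \<exists>v\<in>Zset (T f). cmod (u - v) \<le> C)"
  shows "\<exists>c::complex. c \<noteq> 0 \<and> T (phi 0) = [:c:] \<and>
           (\<forall>m\<le>n. degree (T (phi m)) \<le> m \<and> phi_coord (T (phi m)) m = c)"
proof -
  note L = assms(2) and H = assms(5)
  define c where "c j k = coeff (T (phi k)) j" for j k
  have degT: "degree (T (phi k)) \<le> n" if "k \<le> n" for k
    using L phi_Pn[OF that] unfolding lin_op_Pn_def Pn_def by auto
  have ex: "\<exists>j k. j \<le> n \<and> k \<le> n \<and> c j k \<noteq> 0"
  proof (rule ccontr)
    assume nz: "\<not> (\<exists>j k. j \<le> n \<and> k \<le> n \<and> c j k \<noteq> 0)"
    then have z: "T (phi k) = 0" if "k \<le> n" for k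
    proof -
      have "coeff (T (phi k)) j = 0" for j
        using nz that degT[OF that] coeff_eq_0[of "T (phi k)" j] unfolding c_def
        by (cases "j \<le> n") auto
      then show ?thesis by (intro poly_eqI) simp
    qed
    obtain p where p: "p \<in> Pn n" "T p \<noteq> 0" using assms(3) by blast
    have "T p = T (\<Sum>k\<le>n. smult (coeff p k * fact k) (phi k))" using Pn_decomp[OF p(1)] by simp
    also have "\<dots> = (\<Sum>k\<le>n. smult (coeff p k * fact k) (T (phi k)))"
      by (intro lin_sum[OF L]) (auto intro: phi_Pn)
    also have "\<dots> = 0" using z by simp
    finally show False using p by simp
  qed
  define D where "D = {int j - int k | j k. j \<le> n \<and> k \<le> n \<and> c j k \<noteq> 0}"
  have finD: "finite D"
  proof -
    have "D \<subseteq> (\<lambda>(j,k). int j - int k) ` ({..n} \<times> {..n})" unfolding D_def by auto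
    then show ?thesis by (rule finite_subset) auto
  qed
  have neD: "D \<noteq> {}" using ex unfolding D_def by auto
  define e where "e = Max D"
  have E: "\<forall>j\<le>n. \<forall>k\<le>n. coeff (T (phi k)) j \<noteq> 0 \<longrightarrow> int j - int k \<le> e"
    using finD unfolding e_def D_def c_def by (auto intro!: Max_ge)
  have "e \<in> D" unfolding e_def using finD neD by (rule Max_in)
  then obtain j0 k0 where jk0: "j0 \<le> n" "k0 \<le> n" "c j0 k0 \<noteq> 0" "int j0 - int k0 = e"
    unfolding D_def by auto
  define \<gamma> where "\<gamma> k = (\<Sum>j\<le>n. if int j - int k = e then c j k else 0)" for k
  have rel: "(\<Sum>k\<le>M. (-1)^(M-k) / fact (M-k) * \<gamma> k) = 0" if "1 \<le> M" "M \<le> n" for M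
  proof -
    have "(\<Sum>k\<le>M. (-1)^(M-k) / fact (M-k) * \<gamma> k) =
      (\<Sum>k\<le>M. \<Sum>j\<le>n. if int j - int k = e then (-1)^(M-k) / fact (M-k) * coeff (T (phi k)) j else 0)"
      unfolding \<gamma>_def c_def sum_distrib_left by (intro sum.cong refl) auto
    also have "\<dots> = 0" by (rule band[OF L assms(4) H E that])
    finally show ?thesis .
  qed
  have gam: "\<gamma> k = \<gamma> 0 / fact k" if "k \<le> n" for k
    using that
  proof (induction k rule: less_induct)
    case (less k)
    show ?case
    proof (cases "k = 0")
      case True then show ?thesis by simp
    next
      case False
      then have k1: "1 \<le> k" by simp
      have ins: "{..k} = insert k {..<k}" by auto
      have "0 = (\<Sum>i\<le>k. (-1)^(k-i) / fact (k-i) * \<gamma> i)" using rel[OF k1 less.prems] by simp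
      also have "\<dots> = (\<Sum>i<Suc k. (-1)^(k-i) / fact (k-i) * \<gamma> i)"
        by (simp only: lessThan_Suc_atMost)
      also have "\<dots> = \<gamma> k + (\<Sum>i<k. (-1)^(k-i) / fact (k-i) * \<gamma> i)"
        by (simp only: sum.lessThan_Suc diff_self_eq_0 power_0 fact_0 div_by_1 mult_1 add.commute)
      also have "(\<Sum>i<k. (-1)^(k-i) / fact (k-i) * \<gamma> i) = (\<Sum>i<k. (-1)^(k-i) / (fact (k-i) * fact i)) * \<gamma> 0"
        unfolding sum_distrib_right
      proof (intro sum.cong refl)
        fix i assume i: "i \<in> {..<k}"
        have g: "\<gamma> i = \<gamma> 0 / fact i" by (rule less.IH) (use i less.prems in auto)
        show "(-1)^(k-i) / fact (k-i) * \<gamma> i = (-1)^(k-i) / (fact (k-i) * fact i) * \<gamma> 0"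
          by (subst g) simp
      qed
      also have "(\<Sum>i<k. (-1)^(k-i) / (fact (k-i) * fact i)) * \<gamma> 0 = - \<gamma> 0 / fact k" using alt_ident[OF k1] by simp
      finally show ?thesis by (simp add: eq_neg_iff_add_eq_0)
    qed
  qed
  have gk0: "\<gamma> k0 = c j0 k0"
  proof -
    have "\<gamma> k0 = (\<Sum>j\<le>n. if j = j0 then c j k0 else 0)"
      unfolding \<gamma>_def using jk0 by (intro sum.cong refl) auto
    also have "\<dots> = c j0 k0" using jk0 by simp
    finally show ?thesis .
  qed
  have g0: "\<gamma> 0 \<noteq> 0" using gam[OF jk0(2)] gk0 jk0(3) by auto
  have e0: "e = 0"
  proof (rule ccontr)
    assume "e \<noteq> 0"
    then consider "e \<ge> 1" | "e \<le> -1" by linarith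
    then show False
    proof cases
      case 1
      have "\<gamma> n = 0" unfolding \<gamma>_def using 1 by (intro sum.neutral) auto
      then show False using gam[of n] g0 by simp
    next
      case 2
      have "\<gamma> 0 = 0" unfolding \<gamma>_def using 2 by (intro sum.neutral) auto
      then show False using g0 by simp
    qed
  qed
  have gdiag: "\<gamma> k = c k k" if "k \<le> n" for k
  proof -
    have "\<gamma> k = (\<Sum>j\<le>n. if j = k then c j k else 0)"
      unfolding \<gamma>_def using e0 by (intro sum.cong refl) auto
    also have "\<dots> = c k k" using that by simp
    finally show ?thesis .
  qed
  have degm: "degree (T (phi m)) \<le> m" if "m \<le> n" for m
  proof (rule degree_le, intro allI impI)
    fix i assume i: "m < i"
    show "coeff (T (phi m)) i = 0"
    proof (cases "i \<le> n")
      case True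
      show ?thesis
      proof (rule ccontr)
        assume "coeff (T (phi m)) i \<noteq> 0"
        then have "int i - int m \<le> e" using E True that by blast
        then show False using e0 i by simp
      qed
    next
      case False then show ?thesis using degT[OF that] by (simp add: coeff_eq_0)
    qed
  qed
  show ?thesis
  proof (intro exI conjI allI impI)
    show "\<gamma> 0 \<noteq> 0" by (rule g0)
    have "degree (T (phi 0)) = 0" using degm[of 0] by simp
    then have "[:coeff (T (phi 0)) 0:] = T (phi 0)" by (rule degree_0_id)
    then show "T (phi 0) = [:\<gamma> 0:]" using gdiag[of 0] by (simp add: c_def)
  next
    fix m assume m: "m \<le> n"
    show "degree (T (phi m)) \<le> m" by (rule degm[OF m])
    show "phi_coord (T (phi m)) m = \<gamma> 0"
      using gam[OF m] gdiag[OF m] by (simp add: phi_coord_def c_def)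
  qed
qed

end
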